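(* Let $E = [c_1,d_1]\cup\cdots\cup[c_k,d_k]$ with $0 = c_1 \le d_1 < c_2 \le d_2 < \cdots < c_k \le d_k = 1$, and let $\operatorname{meas}(E) = \sum_{i=1}^k (d_i - c_i)$. Then \[ \beta(E) := \max_{q} \min\left(\mathbb{E}_{i\sim q}[U_0(i)],\ \mathbb{E}_{i\sim q}[U_1(i)]\right) \ge \frac{1}{2 - \operatorname{meas}(E)}, \] where the maximum is over probability distributions $q$ on $\{1,\dots,k\}$.
   Context: For $i \in [k]$, $U_0(i) = \prod_{j=1}^{i-1} \frac{1 - c_{j+1}}{1 - d_j}$ and $U_1(i) = \prod_{l=i}^{k-1} \frac{d_l}{c_{l+1}}$ (empty products equal $1$). *)

theory Defs
  imports Complex_Main
begin

text \<open>Intervals [c_i,d_i], i = 1..k, encoded by c d :: nat => real (indices 1..k).\<close>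

definition U0 :: "(nat \<Rightarrow> real) \<Rightarrow> (nat \<Rightarrow> real) \<Rightarrow> nat \<Rightarrow> real" where
  "U0 c d i = (\<Prod>j = 1..i - 1. (1 - c (j + 1)) / (1 - d j))"

definition U1 :: "(nat \<Rightarrow> real) \<Rightarrow> (nat \<Rightarrow> real) \<Rightarrow> nat \<Rightarrow> nat \<Rightarrow> real" where
  "U1 c d k i = (\<Prod>l = i..k - 1. d l / c (l + 1))"

definition meas :: "(nat \<Rightarrow> real) \<Rightarrow> (nat \<Rightarrow> real) \<Rightarrow> nat \<Rightarrow> real" where
  "meas c d k = (\<Sum>i = 1..k. d i - c i)"

definition prob_dists :: "nat \<Rightarrow> (nat \<Rightarrow> real) set" where
  "prob_dists k = {q. (\<forall>i\<in>{1..k}. 0 \<le> q i) \<and> (\<Sum>i = 1..k. q i) = 1}"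

definition beta :: "(nat \<Rightarrow> real) \<Rightarrow> (nat \<Rightarrow> real) \<Rightarrow> nat \<Rightarrow> real" where
  "beta c d k = Sup ((\<lambda>q. min (\<Sum>i = 1..k. q i * U0 c d i) (\<Sum>i = 1..k. q i * U1 c d k i))
                      ` prob_dists k)"

end

theory Submission
  imports Defs
begin

lemma U0_step:
  assumes "1 - d (n+1) \<noteq> (0::real)"
  shows "U0 c d (n+2) * (1 - d (n+1)) = U0 c d (n+1) * (1 - c (n+2))"
proof -
  have "U0 c d (n+2) = U0 c d (n+1) * ((1 - c (n+2)) / (1 - d (n+1)))"
    unfolding U0_def by (simp add: prod.cl_ivl_Suc)
  thus ?thesis using assms by simp
qed

lemma U0_last:
  assumes "d k = (1::real)" "k \<ge> 1"
  shows "U0 c d (k+1) = 0"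
  unfolding U0_def using assms by (intro prod_zero) (auto intro!: bexI[of _ k])

lemma U1_step:
  assumes "m < k" "c (m+1) \<noteq> (0::real)"
  shows "U1 c d k m * c (m+1) = U1 c d k (m+1) * d m"
proof -
  have "U1 c d k m = d m / c (m+1) * U1 c d k (m+1)"
    unfolding U1_def using assms(1) by (simp add: prod.atLeast_Suc_atMost)
  thus ?thesis using assms by simp
qed

theorem claim3p5:
  fixes c d :: "nat \<Rightarrow> real" and k :: nat
  assumes "k \<ge> 1"
    and "c 1 = 0" and "d k = 1"
    and "\<And>i. 1 \<le> i \<Longrightarrow> i \<le> k \<Longrightarrow> c i \<le> d i"
    and "\<And>i. 1 \<le> i \<Longrightarrow> i < k \<Longrightarrow> d i < c (i + 1)"
  shows "beta c d k \<ge> 1 / (2 - meas c d k)"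
proof -
  note k1 = assms(1) and c1 = assms(2) and dk = assms(3) and cd = assms(4) and dc = assms(5)
  define cc where "cc j = (if j = k+1 then 1 else c j)" for j
  define dd where "dd j = (if j = 0 then 0 else d j)" for j
  define Q where "Q i = cc (i+1) - dd (i-1)" for i
  have mono: "c i \<le> c j" if "1 \<le> i" "i \<le> j" "j \<le> k" for i j
    using that(2)
  proof (induction j rule: dec_induct)
    case base then show ?case by simp
  next
    case (step n)
    have "c n \<le> d n" using cd[of n] step that by simp
    also have "\<dots> < c (n+1)" using dc[of n] step that by simp
    finally show ?case using step by simp
  qed
  have c0: "c i \<ge> 0" if "1 \<le> i" "i \<le> k" for i using mono[of 1 i] that c1 by simp
  have cpos: "c (m+1) > 0" if "1 \<le> m" "m < k" for m
    using c0[of m] cd[of m] dc[of m] that by simp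
  have dlt: "d m < 1" if "1 \<le> m" "m < k" for m
  proof -
    have "d m < c (m+1)" using dc that by simp
    also have "\<dots> \<le> d k" using mono[of "m+1" k] cd[of k] that k1 by simp
    finally show ?thesis using dk by simp
  qed
  have Qnn: "Q i \<ge> 0" if "1 \<le> i" "i \<le> k" for i
  proof (cases "i = 1")
    case True
    show ?thesis
    proof (cases "k = 1")
      case True then show ?thesis using \<open>i=1\<close> by (simp add: Q_def cc_def dd_def)
    next
      case False
      then show ?thesis using \<open>i=1\<close> cd[of 1] dc[of 1] c1 k1 by (simp add: Q_def cc_def dd_def)
    qed
  next
    case False
    have a: "d (i-1) < c i" using dc[of "i-1"] False that by simp
    show ?thesis
    proof (cases "i = k")
      case True
      then show ?thesis using a cd[of k] dk False that by (simp add: Q_def cc_def dd_def)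
    next
      case False
      then show ?thesis using a cd[of i] dc[of i] \<open>i \<noteq> 1\<close> that
        by (simp add: Q_def cc_def dd_def)
    qed
  qed
  have sumQ: "(\<Sum>i=1..n. Q i) = cc (n+1) + dd n - (\<Sum>i=1..n. d i - c i)" if "n \<le> k" for n
    using that
  proof (induction n)
    case 0 then show ?case using c1 k1 by (simp add: cc_def dd_def)
  next
    case (Suc n)
    have "cc (n+1) = c (n+1)" using Suc by (simp add: cc_def)
    then show ?case using Suc by (simp add: Q_def dd_def)
  qed
  have sQ: "(\<Sum>i=1..k. Q i) = 2 - meas c d k"
    using sumQ[of k] dk k1 by (simp add: cc_def dd_def meas_def)
  have T: "(\<Sum>i=1..n. Q i * U0 c d i) = 1 - U0 c d (n+1) * (1 - dd n)" if "n \<le> k" for n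
    using that
  proof (induction n)
    case 0 then show ?case by (simp add: U0_def dd_def)
  next
    case (Suc n)
    have IH: "(\<Sum>i=1..n. Q i * U0 c d i) = 1 - U0 c d (n+1) * (1 - dd n)" using Suc by simp
    have key: "U0 c d (n+2) * (1 - dd (n+1)) = U0 c d (n+1) * (1 - cc (n+2))"
    proof (cases "n+1 = k")
      case True
      then show ?thesis using U0_last[of d k c] dk k1 by (simp add: dd_def cc_def)
    next
      case False
      then have "1 - d (n+1) \<noteq> 0" using dlt[of "n+1"] Suc by simp
      from U0_step[of d n c, OF this] show ?thesis using False by (simp add: dd_def cc_def)
    qed
    have "(\<Sum>i=1..Suc n. Q i * U0 c d i) = 1 - U0 c d (n+1) * (1 - dd n) + Q (n+1) * U0 c d (n+1)"
      using IH by simp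
    also have "\<dots> = 1 - U0 c d (n+1) * (1 - cc (n+2))" by (simp add: Q_def algebra_simps)
    also have "\<dots> = 1 - U0 c d (Suc n + 1) * (1 - dd (Suc n))" using key by simp
    finally show ?case .
  qed
  have T1: "(\<Sum>i=1..k. Q i * U0 c d i) = 1" using T[of k] dk k1 by (simp add: dd_def)
  have R: "(\<Sum>i=m..k. Q i * U1 c d k i) = 1 - U1 c d k m * dd (m-1)" if "1 \<le> m" "m \<le> k+1" for m
    using that(2,1)
  proof (induction m rule: inc_induct)
    case base
    have "U1 c d k (k+1) = 1" by (simp add: U1_def)
    then show ?case using dk k1 by (simp add: dd_def)
  next
    case (step m)
    have IH: "(\<Sum>i=Suc m..k. Q i * U1 c d k i) = 1 - U1 c d k (Suc m) * dd m"
      using step by simp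
    have key: "U1 c d k (m+1) * dd m = U1 c d k m * cc (m+1)"
    proof (cases "m = k")
      case True
      then show ?thesis using dk step by (simp add: U1_def dd_def cc_def)
    next
      case False
      then have "m < k" using step by simp
      from U1_step[OF this, of c d] cpos[of m] step show ?thesis using False
        by (simp add: dd_def cc_def)
    qed
    have "(\<Sum>i=m..k. Q i * U1 c d k i) = Q m * U1 c d k m + (\<Sum>i=Suc m..k. Q i * U1 c d k i)"
      using step by (simp add: sum.atLeast_Suc_atMost)
    also have "\<dots> = 1 - U1 c d k m * dd (m-1)" using IH key by (simp add: Q_def algebra_simps)
    finally show ?case .
  qed
  have R1: "(\<Sum>i=1..k. Q i * U1 c d k i) = 1" using R[of 1] k1 by (simp add: dd_def)
  define M where "M = 2 - meas c d k"
  have Mpos: "M > 0"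
  proof -
    have "0 \<le> (\<Sum>i=1..k. Q i)" using Qnn by (intro sum_nonneg) auto
    moreover have "(\<Sum>i=1..k. Q i) \<noteq> 0"
    proof
      assume "(\<Sum>i=1..k. Q i) = 0"
      hence "\<forall>i\<in>{1..k}. Q i = 0" using Qnn by (subst sum_nonneg_eq_0_iff[symmetric]) auto
      hence "(\<Sum>i=1..k. Q i * U0 c d i) = 0" by simp
      thus False using T1 by simp
    qed
    ultimately show ?thesis using sQ M_def by simp
  qed
  define q where "q i = Q i / M" for i
  have qd: "q \<in> prob_dists k"
    unfolding prob_dists_def q_def using Qnn Mpos sQ M_def
    by (auto simp: sum_divide_distrib[symmetric])
  have v0: "(\<Sum>i=1..k. q i * U0 c d i) = 1 / M"
    using T1 by (simp add: q_def sum_divide_distrib[symmetric])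
  have v1: "(\<Sum>i=1..k. q i * U1 c d k i) = 1 / M"
    using R1 by (simp add: q_def sum_divide_distrib[symmetric])
  let ?f = "\<lambda>q. min (\<Sum>i = 1..k. q i * U0 c d i) (\<Sum>i = 1..k. q i * U1 c d k i)"
  have bdd: "bdd_above (?f ` prob_dists k)"
  proof (rule bdd_aboveI2)
    fix p assume p: "p \<in> prob_dists k"
    hence pnn: "\<And>i. i \<in> {1..k} \<Longrightarrow> 0 \<le> p i" and ps: "(\<Sum>i=1..k. p i) = 1"
      by (auto simp: prob_dists_def)
    have ple: "p i \<le> 1" if "i \<in> {1..k}" for i
      using member_le_sum[of i "{1..k}" p] pnn that ps by simp
    have "?f p \<le> (\<Sum>i = 1..k. p i * U0 c d i)" by simp
    also have "\<dots> \<le> (\<Sum>i = 1..k. \<bar>U0 c d i\<bar>)"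
    proof (rule sum_mono)
      fix i assume i: "i \<in> {1..k}"
      have "p i * U0 c d i \<le> p i * \<bar>U0 c d i\<bar>" using pnn[OF i] by (simp add: mult_left_mono)
      also have "\<dots> \<le> 1 * \<bar>U0 c d i\<bar>" using ple[OF i] by (intro mult_right_mono) auto
      finally show "p i * U0 c d i \<le> \<bar>U0 c d i\<bar>" by simp
    qed
    finally show "?f p \<le> (\<Sum>i = 1..k. \<bar>U0 c d i\<bar>)" .
  qed
  have "?f q \<le> beta c d k"
    unfolding beta_def by (rule cSup_upper[OF imageI[OF qd] bdd])
  thus ?thesis using v0 v1 M_def by simp
qed

end
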